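(* Let $p,q,r\in\mathbb{N}$ with $p,r>1$, and let $T$ be a group of finite exponent $t\in\mathbb{N}$ (i.e. $g^t=1$ for all $g\in T$). For every labelling $\lambda\colon S(p,q,r)\to T$ there exist a labelling $\mu\colon S(tp,q,tr)\to T$ and a digraph epimorphism $\phi\colon\mathbb{S}(tp,q,tr)\to\mathbb{S}(p,q,r)$ such that $\mu(x)^{-1}\mu(y)=\lambda(\phi(y))$ for every edge $(x,y)$ of $\mathbb{S}(tp,q,tr)$. Moreover, for any $x_0\in S(tp,q,tr)$ and any $\alpha\in T$, $\mu$ can be chosen with $\mu(x_0)=\alpha$.
   Context: For $p,q,r\in\mathbb{N}$ with $p,r>1$, the spiral digraph $\mathbb{S}(p,q,r)=(S(p,q,r);s)$ has $p+q+r-2$ vertices $S(p,q,r)=\{a_1,\dots,a_p\}\cup\{b_1,\dots,b_q\}\cup\{c_1,\dots,c_r\}$ where $a_p=b_1$ and $b_q=c_1$ (and otherwise all distinct), and edge set $s=\{(a_i,a_{i+1}):i\in[p-1]\}\cup\{(b_i,b_{i+1}):i\in[q-1]\}\cup\{(c_i,c_{i+1}):i\in[r-1]\}\cup\{(a_p,a_1),(c_r,c_1)\}$. A digraph epimorphism $\phi\colon(B;s^B)\to(A;s^A)$ is a surjection $B\to A$ with $\{(\phi(x),\phi(y)):(x,y)\in s^B\}=s^A$. *)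

theory Defs
  imports "HOL-Algebra.Group"
begin

text \<open>Vertices are encoded as natural numbers 0..p+q+r-3,
laid out along the path a_1,...,a_p = b_1,...,b_q = c_1,...,c_r:
a_i = i - 1, b_j = p + j - 2, c_k = p + q + k - 3 (1-based indices i, j, k).
This realises exactly the identifications a_p = b_1 and b_q = c_1.\<close>

definition sp_a :: "nat \<Rightarrow> nat \<Rightarrow> nat" where
  "sp_a p i = i - 1"

definition sp_b :: "nat \<Rightarrow> nat \<Rightarrow> nat" where
  "sp_b p j = p + j - 2"

definition sp_c :: "nat \<Rightarrow> nat \<Rightarrow> nat \<Rightarrow> nat" where
  "sp_c p q k = p + q + k - 3"

definition spiral_vertices :: "nat \<Rightarrow> nat \<Rightarrow> nat \<Rightarrow> nat set" where
  "spiral_vertices p q r =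
     {sp_a p i | i. 1 \<le> i \<and> i \<le> p} \<union> {sp_b p j | j. 1 \<le> j \<and> j \<le> q}
     \<union> {sp_c p q k | k. 1 \<le> k \<and> k \<le> r}"

definition spiral_edges :: "nat \<Rightarrow> nat \<Rightarrow> nat \<Rightarrow> (nat \<times> nat) set" where
  "spiral_edges p q r =
     {(sp_a p i, sp_a p (i + 1)) | i. 1 \<le> i \<and> i < p}
     \<union> {(sp_b p j, sp_b p (j + 1)) | j. 1 \<le> j \<and> j < q}
     \<union> {(sp_c p q k, sp_c p q (k + 1)) | k. 1 \<le> k \<and> k < r}
     \<union> {(sp_a p p, sp_a p 1), (sp_c p q r, sp_c p q 1)}"

definition digraph_epi ::
  "('b \<Rightarrow> 'a) \<Rightarrow> 'b set \<Rightarrow> ('b \<times> 'b) set \<Rightarrow> 'a set \<Rightarrow> ('a \<times> 'a) set \<Rightarrow> bool" where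
  "digraph_epi \<phi> B sB A sA \<longleftrightarrow>
     \<phi> ` B = A \<and> {(\<phi> x, \<phi> y) | x y. (x, y) \<in> sB} = sA"

end

theory Submission
  imports Defs "HOL-Algebra.Group"
begin


lemma verts:
  assumes "1 < p" "1 \<le> q" "1 < r"
  shows "spiral_vertices p q r = {..< p+q+r-2}"
proof
  show "spiral_vertices p q r \<subseteq> {..< p+q+r-2}"
    using assms by (auto simp: spiral_vertices_def sp_a_def sp_b_def sp_c_def)
  show "{..< p+q+r-2} \<subseteq> spiral_vertices p q r"
  proof
    fix v assume v: "v \<in> {..< p+q+r-2}"
    show "v \<in> spiral_vertices p q r"
    proof (cases "v < p")
      case True
      then have "v = sp_a p (v+1) \<and> 1 \<le> v+1 \<and> v+1 \<le> p" by (simp add: sp_a_def)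
      then show ?thesis unfolding spiral_vertices_def by blast
    next
      case F1: False
      show ?thesis
      proof (cases "v \<le> p+q-2")
        case True
        then have "v = sp_b p (v+2-p) \<and> 1 \<le> v+2-p \<and> v+2-p \<le> q" using F1 assms by (simp add: sp_b_def) linarith
        then show ?thesis unfolding spiral_vertices_def by blast
      next
        case False
        then have "v = sp_c p q (v+3-p-q) \<and> 1 \<le> v+3-p-q \<and> v+3-p-q \<le> r" using F1 v assms by (simp add: sp_c_def) linarith
        then show ?thesis unfolding spiral_vertices_def by blast
      qed
    qed
  qed
qed

lemma edges:
  assumes "1 < p" "1 \<le> q" "1 < r"
  shows "spiral_edges p q r = {(v, Suc v) | v. Suc v < p+q+r-2} \<union> {(p-1,0),(p+q+r-3, p+q-2)}"
proof
  show "spiral_edges p q r \<subseteq> {(v, Suc v) | v. Suc v < p+q+r-2} \<union> {(p-1,0),(p+q+r-3, p+q-2)}"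
    using assms by (auto simp: spiral_edges_def sp_a_def sp_b_def sp_c_def)
  show "{(v, Suc v) | v. Suc v < p+q+r-2} \<union> {(p-1,0),(p+q+r-3, p+q-2)} \<subseteq> spiral_edges p q r"
  proof
    fix e assume "e \<in> {(v, Suc v) | v. Suc v < p+q+r-2} \<union> {(p-1,0),(p+q+r-3, p+q-2)}"
    then consider v where "e = (v, Suc v)" "Suc v < p+q+r-2" | "e = (p-1,0)" | "e = (p+q+r-3, p+q-2)" by blast
    then show "e \<in> spiral_edges p q r"
    proof cases
      case 1
      show ?thesis
      proof (cases "Suc v < p")
        case True
        then have "e = (sp_a p (v+1), sp_a p (v+1+1)) \<and> 1 \<le> v+1 \<and> v+1 < p" using 1 by (simp add: sp_a_def)
        then show ?thesis unfolding spiral_edges_def by blast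
      next
        case F1: False
        show ?thesis
        proof (cases "Suc v < p+q-1")
          case True
          then have "e = (sp_b p (v+2-p), sp_b p (v+2-p+1)) \<and> 1 \<le> v+2-p \<and> v+2-p < q" using 1 F1 assms by (simp add: sp_b_def) linarith
          then show ?thesis unfolding spiral_edges_def by blast
        next
          case False
          then have "e = (sp_c p q (v+3-p-q), sp_c p q (v+3-p-q+1)) \<and> 1 \<le> v+3-p-q \<and> v+3-p-q < r" using 1 F1 assms by (simp add: sp_c_def) linarith
          then show ?thesis unfolding spiral_edges_def by blast
        qed
      qed
    next
      case 2 then show ?thesis using assms by (simp add: spiral_edges_def sp_a_def)
    next
      case 3 then show ?thesis using assms by (simp add: spiral_edges_def sp_c_def)
    qed
  qed
qed



definition phi :: "nat \<Rightarrow> nat \<Rightarrow> nat \<Rightarrow> nat \<Rightarrow> nat \<Rightarrow> nat" where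
"phi p q r t v = (if v < t*p then v mod p else if v \<le> t*p+q-2 then v - t*p + p
   else p+q-2 + (v - (t*p+q-2)) mod r)"

lemma km1:
  fixes t m :: nat
  assumes "1 \<le> t" "1 < m" shows "(t*m - 1) mod m = m - 1"
proof -
  obtain k where k: "t = Suc k" using assms(1) by (cases t) auto
  have "t*m - 1 = (m - 1) + k*m" using k assms(2) by simp
  also have "((m - 1) + k*m) mod m = (m - 1) mod m" by (rule mod_mult_self1)
  also have "\<dots> = m - 1" using assms(2) by simp
  finally show ?thesis .
qed

context
  fixes p q r t :: nat
  assumes P: "1 < p" and Q: "1 \<le> q" and R: "1 < r" and T: "1 \<le> t"
begin

lemma tp_ge: "p \<le> t*p" using T by simp

lemma tpm1: "(t*p - 1) mod p = p - 1"
  using km1[OF T P] .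

lemma phi_a: "v < t*p \<Longrightarrow> phi p q r t v = v mod p"
  by (simp add: phi_def)

lemma phi_b: "t*p \<le> v \<Longrightarrow> v \<le> t*p+q-2 \<Longrightarrow> phi p q r t v = v - t*p + p"
  by (simp add: phi_def)

lemma phi_c: "phi p q r t (t*p+q-2+n) = p+q-2 + n mod r"
proof (cases "n = 0")
  case True
  show ?thesis
  proof (cases "q = 1")
    case True
    then have "t*p+q-2+n = t*p - 1" "t*p - 1 < t*p" using \<open>n=0\<close> tp_ge P by auto
    then show ?thesis using tpm1 phi_a True \<open>n=0\<close> P by simp
  next
    case False
    then have "\<not> t*p+q-2 < t*p" "t*p+q-2 - t*p + p = p+q-2" using Q P by linarith+
    then show ?thesis using \<open>n=0\<close> by (simp add: phi_def)
  qed
next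
  case False
  then show ?thesis using Q P tp_ge by (simp add: phi_def)
qed

lemma phi_c': "t*p+q-2 \<le> v \<Longrightarrow> phi p q r t v = p+q-2 + (v - (t*p+q-2)) mod r"
  using phi_c[of "v - (t*p+q-2)"] by simp

lemma phi_tp: "phi p q r t (t*p) = p"
proof (cases "q = 1")
  case True
  then have "t*p = t*p+q-2+1" using tp_ge P by auto
  then have "phi p q r t (t*p) = p+q-2 + 1 mod r" using phi_c by metis
  then show ?thesis using True R P by simp
next
  case False
  then show ?thesis using phi_b[of "t*p"] Q by simp
qed

lemma phi_tpm1: "phi p q r t (t*p - 1) = p - 1"
  using phi_a[of "t*p-1"] tpm1 tp_ge P by simp

lemma phi_lt: "phi p q r t v < p+q+r-2"
proof -
  have "v mod p < p" using P by simp
  then have a: "v mod p < p+q+r-2" using P Q R by linarith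
  have b: "p+q-2 + (v - (t*p+q-2)) mod r < p+q+r-2"
  proof -
    have "(v - (t*p+q-2)) mod r < r" using R by simp
    then show ?thesis using P Q by linarith
  qed
  have c: "v - t*p + p < p+q+r-2" if "v \<le> t*p+q-2" "\<not> v < t*p" using that R P Q tp_ge by linarith
  show ?thesis using a b c unfolding phi_def by auto
qed

lemma phi_surj: "u < p+q+r-2 \<Longrightarrow> \<exists>v < t*p+q+t*r-2. phi p q r t v = u"
proof -
  assume u: "u < p+q+r-2"
  have tr: "r \<le> t*r" using T by simp
  show ?thesis
  proof (cases "u < p")
    case True
    moreover have "u < t*p+q+t*r-2" using True tp_ge Q R tr by linarith
    ultimately show ?thesis using phi_a[of u] tp_ge by (intro exI[of _ u]) auto
  next
    case F: False
    show ?thesis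
    proof (cases "u \<le> p+q-2")
      case True
      moreover have "u - p + t*p < t*p+q+t*r-2" using True F tp_ge Q R tr P by linarith
      ultimately show ?thesis using phi_b[of "u - p + t*p"] F tp_ge Q R tr P
        by (intro exI[of _ "u - p + t*p"]) auto
    next
      case False
      have "phi p q r t (t*p+q-2 + (u - (p+q-2))) = u"
        using phi_c[of "u - (p+q-2)"] False u by simp
      moreover have "t*p+q-2 + (u - (p+q-2)) < t*p+q+t*r-2" using False u tr P Q tp_ge by linarith
      ultimately show ?thesis by blast
    qed
  qed
qed

abbreviation "SE \<equiv> {(v, Suc v) | v. Suc v < p+q+r-2} \<union> {(p-1,0),(p+q+r-3, p+q-2)}"
abbreviation "BE \<equiv> {(v, Suc v) | v. Suc v < t*p+q+t*r-2} \<union> {(t*p-1,0),(t*p+q+t*r-3, t*p+q-2)}"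

lemma phi_edge: "Suc v < t*p+q+t*r-2 \<Longrightarrow> (phi p q r t v, phi p q r t (Suc v)) \<in> SE"
proof -
  assume v: "Suc v < t*p+q+t*r-2"
  consider "Suc v < t*p" | "Suc v = t*p" | "t*p \<le> v" "Suc v \<le> t*p+q-2" | "t*p+q-2 \<le> v"
    by linarith
  then show ?thesis
  proof cases
    case 1
    then have e: "phi p q r t v = v mod p" "phi p q r t (Suc v) = Suc v mod p"
      using phi_a[of v] phi_a[of "Suc v"] by simp_all
    show ?thesis
    proof (cases "Suc (v mod p) = p")
      case True
      then have "v mod p = p - 1" by simp
      then show ?thesis using e True by (simp add: mod_Suc)
    next
      case False
      moreover have "v mod p < p" using P by simp
      ultimately have "Suc (v mod p) < p" by linarith
      then have "Suc (v mod p) < p+q+r-2" using Q R by linarith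
      then show ?thesis using e False Q R by (simp add: mod_Suc)
    qed
  next
    case 2
    then have "v = t*p - 1" by simp
    then have e: "phi p q r t v = p - 1" "phi p q r t (Suc v) = p" using phi_tp phi_tpm1 2 by simp_all
    have "Suc (p - 1) < p+q+r-2" "Suc (p-1) = p" using P Q R by linarith+
    then show ?thesis unfolding e by (metis (mono_tags, lifting) CollectI UnI1)
  next
    case 3
    then have e: "phi p q r t v = v - t*p + p" "phi p q r t (Suc v) = Suc (v - t*p + p)"
      using phi_b[of v] phi_b[of "Suc v"] by simp_all
    have "Suc (v - t*p + p) < p+q+r-2" using 3 P Q R by linarith
    then show ?thesis unfolding e by blast
  next
    case 4
    define n where "n = v - (t*p+q-2)"
    have e: "phi p q r t v = p+q-2 + n mod r" "phi p q r t (Suc v) = p+q-2 + Suc n mod r"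
    proof -
      have "Suc v - (t*p+q-2) = Suc n" using 4 n_def by linarith
      then show "phi p q r t v = p+q-2 + n mod r" "phi p q r t (Suc v) = p+q-2 + Suc n mod r"
        using phi_c'[of v] phi_c'[of "Suc v"] 4 n_def by simp_all
    qed
    have nr: "n mod r < r" using R by simp
    show ?thesis
    proof (cases "Suc (n mod r) = r")
      case True
      then have "p+q-2 + n mod r = p+q+r-3" using P Q by linarith
      then show ?thesis using e True by (simp add: mod_Suc)
    next
      case False
      then have "Suc (n mod r) < r" using nr by linarith
      then have "Suc (p+q-2 + n mod r) < p+q+r-2" using P Q by linarith
      then show ?thesis using e False by (simp add: mod_Suc)
    qed
  qed
qed

lemma phi_wrap1: "(phi p q r t (t*p-1), phi p q r t 0) = (p-1, 0)"
proof -
  have "0 < t*p" using tp_ge P by linarith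
  then have "phi p q r t 0 = 0" using phi_a[of 0] by simp
  then show ?thesis using phi_tpm1 by simp
qed

lemma phi_wrap2: "(phi p q r t (t*p+q+t*r-3), phi p q r t (t*p+q-2)) = (p+q+r-3, p+q-2)"
proof -
  have tr: "r \<le> t*r" using T by simp
  have e1: "t*p+q+t*r-3 = t*p+q-2 + (t*r - 1)" using tp_ge tr P Q R by linarith
  have e2: "(t*r - 1) mod r = r - 1" using km1[OF T R] .
  have "phi p q r t (t*p+q+t*r-3) = p+q-2 + (t*r - 1) mod r" unfolding e1 by (rule phi_c)
  also have "\<dots> = p+q+r-3" unfolding e2 using P Q R by linarith
  finally have a: "phi p q r t (t*p+q+t*r-3) = p+q+r-3" .
  have "phi p q r t (t*p+q-2) = p+q-2" using phi_c[of 0] by simp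
  with a show ?thesis by simp
qed

lemma phi_pre: "e \<in> SE \<Longrightarrow> \<exists>x y. (x, y) \<in> BE \<and> e = (phi p q r t x, phi p q r t y)"
proof -
  assume "e \<in> SE"
  have tr: "r \<le> t*r" using T by simp
  from \<open>e \<in> SE\<close> consider u where "e = (u, Suc u)" "Suc u < p+q+r-2" | "e = (p-1,0)" | "e = (p+q+r-3, p+q-2)"
    by fast
  then show ?thesis
  proof cases
    case 1
    note o1 = 1
    consider "Suc u < p" | "Suc u = p" | "p \<le> u" "u < p+q-2" | "p+q-2 \<le> u" by linarith
    then show ?thesis
    proof cases
      case 1
      then have "Suc u < t*p+q+t*r-2" using tp_ge tr Q R by linarith
      then have mem: "(u, Suc u) \<in> BE" by blast
      have "u < t*p" "Suc u < t*p" using 1 tp_ge by linarith+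
      then have "phi p q r t u = u" "phi p q r t (Suc u) = Suc u"
        using 1 phi_a[of u] phi_a[of "Suc u"] by simp_all
      then have "e = (phi p q r t u, phi p q r t (Suc u))" using o1(1) by simp
      then show ?thesis using mem by blast
    next
      case 2
      have "Suc (t*p-1) < t*p+q+t*r-2" using tp_ge tr Q P R by linarith
      then have "(t*p-1, Suc (t*p-1)) \<in> BE" by blast
      moreover have "Suc (t*p-1) = t*p" "u = p - 1" "Suc (p - 1) = p" using tp_ge P 2 by linarith+
      then have "e = (phi p q r t (t*p-1), phi p q r t (Suc (t*p-1)))"
        using o1(1) phi_tp phi_tpm1 by simp
      ultimately show ?thesis by blast
    next
      case 3
      define x where "x = u - p + t*p"
      have x1: "Suc x < t*p+q+t*r-2" "t*p \<le> x" "Suc x \<le> t*p+q-2" "x - t*p + p = u"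
        "Suc x - t*p + p = Suc u"
        using 3 tp_ge tr Q P R unfolding x_def by linarith+
      then have "(x, Suc x) \<in> BE" by blast
      moreover have "phi p q r t x = u" using phi_b[of x] x1 by simp
      moreover have "phi p q r t (Suc x) = Suc u" using phi_b[of "Suc x"] x1 by simp
      ultimately have "e = (phi p q r t x, phi p q r t (Suc x))" using o1(1) by simp
      then show ?thesis using \<open>(x, Suc x) \<in> BE\<close> by blast
    next
      case 4
      define n where "n = u - (p+q-2)"
      define x where "x = t*p+q-2+n"
      have nr: "Suc n < r" using o1 4 n_def by linarith
      have "Suc x < t*p+q+t*r-2" using nr tp_ge tr Q P unfolding x_def by linarith
      then have mem: "(x, Suc x) \<in> BE" by blast
      have "Suc x = t*p+q-2 + Suc n" unfolding x_def by simp
      then have "phi p q r t x = u" "phi p q r t (Suc x) = Suc u"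
        using phi_c[of n] phi_c[of "Suc n"] nr 4 n_def x_def by simp_all
      then have "e = (phi p q r t x, phi p q r t (Suc x))" using o1(1) by simp
      then show ?thesis using mem by blast
    qed
  next
    case 2
    have "(t*p-1, 0) \<in> BE" by simp
    then show ?thesis using phi_wrap1 2 by (intro exI[of _ "t*p-1"] exI[of _ 0]) simp
  next
    case 3
    have "(t*p+q+t*r-3, t*p+q-2) \<in> BE" by simp
    then show ?thesis using phi_wrap2 3 by (intro exI[of _ "t*p+q+t*r-3"] exI[of _ "t*p+q-2"]) simp
  qed
qed

end


primrec prodf :: "('a, 'b) monoid_scheme \<Rightarrow> (nat \<Rightarrow> 'a) \<Rightarrow> nat \<Rightarrow> 'a" where
  "prodf G h 0 = \<one>\<^bsub>G\<^esub>"
| "prodf G h (Suc n) = prodf G h n \<otimes>\<^bsub>G\<^esub> h (Suc n)"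

context group
begin

lemma prodf_closed: "(\<And>w. h w \<in> carrier G) \<Longrightarrow> prodf G h n \<in> carrier G"
  by (induction n) auto

lemma prodf_period:
  assumes c: "\<And>w. h w \<in> carrier G" and per: "\<And>w. h (w + m) = h w"
  shows "prodf G h (k*m + n) = prodf G h (k*m) \<otimes> prodf G h n"
proof (induction n)
  case 0
  then show ?case using prodf_closed[OF c] by simp
next
  case (Suc n)
  have hk: "h (k*m + w) = h w" for w
  proof (induction k)
    case (Suc k)
    have "h (Suc k * m + w) = h ((k*m + w) + m)" by (simp add: algebra_simps)
    then show ?case using per Suc by simp
  qed simp
  have "prodf G h (k*m + Suc n) = prodf G h (k*m + n) \<otimes> h (k*m + Suc n)" by simp
  also have "\<dots> = (prodf G h (k*m) \<otimes> prodf G h n) \<otimes> h (Suc n)" using Suc hk[of "Suc n"] by simp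
  also have "\<dots> = prodf G h (k*m) \<otimes> prodf G h (Suc n)"
    using prodf_closed[OF c] c by (simp add: m_assoc)
  finally show ?case .
qed

lemma prodf_pow:
  assumes c: "\<And>w. h w \<in> carrier G" and per: "\<And>w. h (w + m) = h w"
  shows "prodf G h (k*m) = prodf G h m [^] k"
proof (induction k)
  case 0
  then show ?case by simp
next
  case (Suc k)
  have "prodf G h (Suc k * m) = prodf G h (k*m + m)" by (simp add: algebra_simps)
  also have "\<dots> = prodf G h (k*m) \<otimes> prodf G h m" by (rule prodf_period[where h=h, OF c per])
  finally show ?case using Suc by simp
qed

lemma inv_shift:
  assumes "b \<in> carrier G" "x \<in> carrier G" "y \<in> carrier G"
  shows "inv (b \<otimes> x) \<otimes> (b \<otimes> y) = inv x \<otimes> y"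
  using assms by (simp add: inv_mult_group m_assoc[symmetric]) (simp add: m_assoc)

end



theorem lemma4p1:
  fixes G (structure)
    and p q r t :: nat and lam :: "nat \<Rightarrow> 'a"
  assumes "group G"
    and "p > 1" and "r > 1" and "q \<ge> 1"
    and "t \<ge> 1"
    and "\<forall>g \<in> carrier G. g [^] t = \<one>"
    and "lam \<in> spiral_vertices p q r \<rightarrow> carrier G"
    and "x0 \<in> spiral_vertices (t * p) q (t * r)"
    and "\<alpha> \<in> carrier G"
  shows "\<exists>\<mu> \<phi>. \<mu> \<in> spiral_vertices (t * p) q (t * r) \<rightarrow> carrier G
     \<and> digraph_epi \<phi> (spiral_vertices (t * p) q (t * r)) (spiral_edges (t * p) q (t * r))
                      (spiral_vertices p q r) (spiral_edges p q r)
     \<and> (\<forall>(x, y) \<in> spiral_edges (t * p) q (t * r). inv (\<mu> x) \<otimes> \<mu> y = lam (\<phi> y))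
     \<and> \<mu> x0 = \<alpha>"
proof -
  interpret group G by fact
  note P = assms(2) and R = assms(3) and Q = assms(4) and T = assms(5)
  have tp: "p \<le> t*p" "r \<le> t*r" using T by simp_all
  have tp1: "1 < t*p" "1 < t*r" using tp P R by linarith+
  have V: "spiral_vertices p q r = {..< p+q+r-2}" by (rule verts[OF P Q R])
  have V': "spiral_vertices (t*p) q (t*r) = {..< t*p+q+t*r-2}" by (rule verts[OF tp1(1) Q tp1(2)])
  have E: "spiral_edges p q r = {(v, Suc v) | v. Suc v < p+q+r-2} \<union> {(p-1,0),(p+q+r-3, p+q-2)}"
    by (rule edges[OF P Q R])
  have E': "spiral_edges (t*p) q (t*r) = {(v, Suc v) | v. Suc v < t*p+q+t*r-2}
      \<union> {(t*p-1,0),(t*p+q+t*r-3, t*p+q-2)}"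
    by (rule edges[OF tp1(1) Q tp1(2)])
  define ph where "ph = phi p q r t"
  have lamc: "lam u \<in> carrier G" if "u < p+q+r-2" for u
    using assms(7) that V by auto
  have lc: "lam (ph w) \<in> carrier G" for w
    using lamc phi_lt[OF P Q R T] ph_def by simp
  define g where "g = prodf G (\<lambda>w. lam (ph w))"
  have gc: "g n \<in> carrier G" for n unfolding g_def by (rule prodf_closed) (rule lc)
  define f where "f = prodf G (\<lambda>w. lam (w mod p))"
  have fhc: "lam (w mod p) \<in> carrier G" for w
  proof -
    have "w mod p < p" using P by simp
    then show ?thesis using lamc Q R by simp
  qed
  have fc: "f n \<in> carrier G" for n unfolding f_def by (rule prodf_closed) (rule fhc)
  define f2 where "f2 = prodf G (\<lambda>w. lam (p+q-2 + w mod r))"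
  have f2hc: "lam (p+q-2 + w mod r) \<in> carrier G" for w
  proof -
    have "w mod r < r" using R by simp
    then show ?thesis using lamc P Q by simp
  qed
  have f2c: "f2 n \<in> carrier G" for n unfolding f2_def by (rule prodf_closed) (rule f2hc)
  have f1: "f (t*p) = \<one>"
  proof -
    have "f (t*p) = f p [^] t" unfolding f_def
      by (rule prodf_pow[where h="\<lambda>w. lam (w mod p)", OF fhc]) simp
    then show ?thesis using assms(6) fc by simp
  qed
  have f21: "f2 (t*r) = \<one>"
  proof -
    have "f2 (t*r) = f2 r [^] t" unfolding f2_def
      by (rule prodf_pow[where h="\<lambda>w. lam (p+q-2 + w mod r)", OF f2hc]) simp
    then show ?thesis using assms(6) f2c by simp
  qed
  have ga: "v < t*p \<Longrightarrow> g v = f v" for v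
  proof (induction v)
    case 0
    then show ?case by (simp add: g_def f_def)
  next
    case (Suc v)
    then have "g v = f v" by simp
    moreover have "ph (Suc v) = Suc v mod p" using phi_a[OF P Q R T] Suc ph_def by simp
    ultimately show ?case by (simp add: g_def f_def)
  qed
  have gcc: "g (t*p+q-2 + n) = g (t*p+q-2) \<otimes> f2 n" for n
  proof (induction n)
    case 0
    then show ?case using gc by (simp add: f2_def)
  next
    case (Suc n)
    have "ph (t*p+q-2 + Suc n) = p+q-2 + Suc n mod r" using phi_c[OF P Q R T, of "Suc n"] ph_def by simp
    then have "g (t*p+q-2 + Suc n) = g (t*p+q-2 + n) \<otimes> lam (p+q-2 + Suc n mod r)"
      by (simp add: g_def)
    also have "\<dots> = g (t*p+q-2) \<otimes> f2 n \<otimes> lam (p+q-2 + Suc n mod r)" using Suc by simp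
    also have "\<dots> = g (t*p+q-2) \<otimes> f2 (Suc n)"
      using gc f2c f2hc by (simp add: f2_def m_assoc)
    finally show ?case .
  qed
  define \<beta> where "\<beta> = \<alpha> \<otimes> inv (g x0)"
  have bc: "\<beta> \<in> carrier G" using assms(9) gc by (simp add: \<beta>_def)
  define \<mu> where "\<mu> = (\<lambda>v. \<beta> \<otimes> g v)"
  have mu_edge: "inv (\<mu> x) \<otimes> \<mu> y = inv (g x) \<otimes> g y" for x y
    unfolding \<mu>_def by (rule inv_shift[OF bc gc gc])
  have c1: "\<mu> \<in> spiral_vertices (t * p) q (t * r) \<rightarrow> carrier G"
    using bc gc by (simp add: \<mu>_def)
  have c4: "\<mu> x0 = \<alpha>"
    using bc gc assms(9) by (simp add: \<mu>_def \<beta>_def m_assoc)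
  have c3: "\<forall>(x, y) \<in> spiral_edges (t * p) q (t * r). inv (\<mu> x) \<otimes> \<mu> y = lam (ph y)"
  proof (clarsimp simp only: E' mu_edge)
    fix x y assume xy: "(x, y) \<in> {(v, Suc v) | v. Suc v < t*p+q+t*r-2} \<union> {(t*p-1,0),(t*p+q+t*r-3, t*p+q-2)}"
    then consider "y = Suc x" | "x = t*p-1" "y = 0" | "x = t*p+q+t*r-3" "y = t*p+q-2" by blast
    then show "inv (g x) \<otimes> g y = lam (ph y)"
    proof cases
      case 1
      then have "g y = g x \<otimes> lam (ph y)" by (simp add: g_def)
      then show ?thesis using gc lc inv_solve_left' by simp
    next
      case 2
      have "ph 0 = 0" using phi_wrap1[OF P Q R T] ph_def by simp
      have "f (Suc (t*p-1)) = f (t*p-1) \<otimes> lam (Suc (t*p-1) mod p)" by (simp add: f_def)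
      moreover have "Suc (t*p-1) = t*p" using tp1 by simp
      ultimately have "f (t*p-1) \<otimes> lam 0 = \<one>" using f1 by simp
      moreover have "g (t*p-1) = f (t*p-1)" using ga tp1 by simp
      ultimately have "g y = g x \<otimes> lam (ph y)" using 2 \<open>ph 0 = 0\<close> by (simp add: g_def)
      then show ?thesis using gc lc inv_solve_left' by simp
    next
      case 3
      have "ph (t*p+q-2) = p+q-2" using phi_c[OF P Q R T, of 0] ph_def by simp
      have "f2 (Suc (t*r-1)) = f2 (t*r-1) \<otimes> lam (p+q-2 + Suc (t*r-1) mod r)" by (simp add: f2_def)
      moreover have "Suc (t*r-1) = t*r" using tp1 by simp
      ultimately have fe: "f2 (t*r-1) \<otimes> lam (p+q-2) = \<one>" using f21 by simp
      have "t*p+q+t*r-3 = t*p+q-2 + (t*r-1)" using tp1 tp P Q by linarith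
      then have "g x = g (t*p+q-2) \<otimes> f2 (t*r-1)" using 3 gcc by simp
      then have "g x \<otimes> lam (ph y) = g (t*p+q-2) \<otimes> (f2 (t*r-1) \<otimes> lam (p+q-2))"
      proof -
        have lq: "lam (p+q-2) \<in> carrier G" using f2hc[of 0] by simp
        show ?thesis using 3 \<open>ph (t*p+q-2) = p+q-2\<close> \<open>g x = _\<close> gc f2c lq by (simp add: m_assoc)
      qed
      also have "\<dots> = g y" using fe 3 gc by simp
      finally show ?thesis using gc lc inv_solve_left' by simp
    qed
  qed
  have c2: "digraph_epi ph (spiral_vertices (t * p) q (t * r)) (spiral_edges (t * p) q (t * r))
                      (spiral_vertices p q r) (spiral_edges p q r)"
    unfolding digraph_epi_def
  proof
    show "ph ` spiral_vertices (t * p) q (t * r) = spiral_vertices p q r"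
      unfolding V V' ph_def using phi_lt[OF P Q R T] phi_surj[OF P Q R T] by (auto simp: image_iff)
  next
    show "{(ph x, ph y) |x y. (x, y) \<in> spiral_edges (t * p) q (t * r)} = spiral_edges p q r"
    proof
      show "{(ph x, ph y) |x y. (x, y) \<in> spiral_edges (t * p) q (t * r)} \<subseteq> spiral_edges p q r"
      proof clarify
        fix x y assume "(x, y) \<in> spiral_edges (t * p) q (t * r)"
        then consider "y = Suc x" "Suc x < t*p+q+t*r-2" | "x = t*p-1" "y = 0" | "x = t*p+q+t*r-3" "y = t*p+q-2"
          unfolding E' by blast
        then show "(ph x, ph y) \<in> spiral_edges p q r"
        proof cases
          case 1 then show ?thesis using phi_edge[OF P Q R T, of x] unfolding E ph_def by simp
        next
          case 2 then show ?thesis using phi_wrap1[OF P Q R T] unfolding E ph_def by simp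
        next
          case 3 then show ?thesis using phi_wrap2[OF P Q R T] unfolding E ph_def by simp
        qed
      qed
    next
      show "spiral_edges p q r \<subseteq> {(ph x, ph y) |x y. (x, y) \<in> spiral_edges (t * p) q (t * r)}"
      proof
        fix e assume "e \<in> spiral_edges p q r"
        then obtain x y where "(x, y) \<in> spiral_edges (t * p) q (t * r)" "e = (ph x, ph y)"
          using phi_pre[OF P Q R T, of e] unfolding E E' ph_def by blast
        then show "e \<in> {(ph x, ph y) |x y. (x, y) \<in> spiral_edges (t * p) q (t * r)}" by blast
      qed
    qed
  qed
  show ?thesis
    apply (rule exI[of _ \<mu>], rule exI[of _ ph])
    using c1 c2 c3 c4 by (intro conjI)
qed

end
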